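(* Let $s:N_S\to\ell_2$ be any bijection with $s(n)=ne_1$ for all $n\in\mathbf{N}$, and let $x\oplus_s y=s^{-1}(s(x)+s(y))$. Then it is not the case that $\underbrace{m\oplus_s\cdots\oplus_s m}_{n}=nm$ for all $n\in\mathbf{N}$ and all $m\in N_S$.
   Context: $\mathbf{N}=\{1,2,3,\dots\}$. $\ell_2$ is the Hilbert space of square-summable real sequences and $e_1=(1,0,0,\dots)$. The set $N_S$ of supernatural (Steinitz) numbers consists of formal products $n=\prod_{p} p^{e_p(n)}$ over all primes $p$, with exponents $e_p(n)\in\{0,1,2,\dots\}\cup\{\infty\}$ (possibly infinitely many nonzero); $\mathbf{N}$ is identified with the elements having all exponents finite and only finitely many nonzero. Multiplication is defined by adding exponents, with $\infty+e=\infty$ (so e.g. $2\cdot 2^\infty=2^\infty$ and $3\cdot 2^\infty\ne 2^\infty$). *)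

theory Defs
  imports "HOL-Computational_Algebra.Primes" "HOL-Library.Extended_Nat" Complex_Main
begin

text \<open>Supernatural (Steinitz) numbers: exponent functions on primes with values in
  nat extended by infinity; the value at non-primes is fixed to 0.\<close>
typedef supernat = "{f :: nat \<Rightarrow> enat. \<forall>p. \<not> prime p \<longrightarrow> f p = 0}"
  by (rule exI[of _ "\<lambda>_. 0"]) simp

definition sn_mult :: "supernat \<Rightarrow> supernat \<Rightarrow> supernat" where
  "sn_mult a b = Abs_supernat (\<lambda>p. Rep_supernat a p + Rep_supernat b p)"

definition sn_of_nat :: "nat \<Rightarrow> supernat" where
  "sn_of_nat n = Abs_supernat (\<lambda>p. if prime p then enat (multiplicity p n) else 0)"

definition ell2 :: "(nat \<Rightarrow> real) set" where
  "ell2 = {x. summable (\<lambda>i. (x i)\<^sup>2)}"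

definition e1 :: "nat \<Rightarrow> real" where
  "e1 = (\<lambda>i. if i = 0 then 1 else 0)"

definition oplus_s :: "(supernat \<Rightarrow> nat \<Rightarrow> real) \<Rightarrow> supernat \<Rightarrow> supernat \<Rightarrow> supernat" where
  "oplus_s s x y = inv_into UNIV s (\<lambda>i. s x i + s y i)"

text \<open>n-fold sum m \<oplus>_s ... \<oplus>_s m (n \<ge> 1 copies), bracketed to the left.\<close>
fun oplus_rep :: "(supernat \<Rightarrow> nat \<Rightarrow> real) \<Rightarrow> nat \<Rightarrow> supernat \<Rightarrow> supernat" where
  "oplus_rep s (Suc 0) m = m"
| "oplus_rep s (Suc (Suc k)) m = oplus_s s (oplus_rep s (Suc k) m) m"

end

theory Submission
  imports Defs
begin

lemma idem_zero:
  fixes s :: "supernat \<Rightarrow> nat \<Rightarrow> real"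
  assumes b: "bij_betw s UNIV ell2"
    and h: "oplus_rep s 2 m = m"
  shows "s m = (\<lambda>_. 0)"
proof -
  have "s m \<in> ell2" using b by (auto simp: bij_betw_def)
  hence sm: "summable (\<lambda>i. (s m i)\<^sup>2)" by (simp add: ell2_def)
  have "summable (\<lambda>i. 4 * (s m i)\<^sup>2)" using summable_mult[OF sm, of 4] by simp
  hence "(\<lambda>i. s m i + s m i) \<in> ell2"
    by (simp add: ell2_def power2_eq_square algebra_simps)
  hence r: "(\<lambda>i. s m i + s m i) \<in> range s" using b by (auto simp: bij_betw_def)
  have "oplus_rep s 2 m = inv_into UNIV s (\<lambda>i. s m i + s m i)"
    by (simp add: numeral_2_eq_2 oplus_s_def)
  hence "s m = s (inv_into UNIV s (\<lambda>i. s m i + s m i))" using h by simp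
  also have "\<dots> = (\<lambda>i. s m i + s m i)" using r by (simp add: f_inv_into_f)
  finally show ?thesis by (metis add_cancel_left_left)
qed

lemma mult2_idem:
  assumes "\<forall>p. \<not> prime p \<longrightarrow> f p = 0" and "\<forall>p. prime p \<longrightarrow> f p = 0 \<or> f p = \<infinity>"
    and "f 2 = \<infinity>"
  shows "sn_mult (sn_of_nat 2) (Abs_supernat f) = Abs_supernat f"
proof -
  have f: "Rep_supernat (Abs_supernat f) = f" using assms(1) by (simp add: Abs_supernat_inverse)
  have g: "Rep_supernat (sn_of_nat 2) = (\<lambda>p. if prime p then enat (multiplicity p 2) else 0)"
    unfolding sn_of_nat_def by (rule Abs_supernat_inverse) simp
  have "(\<lambda>p. (if prime p then enat (multiplicity p (2::nat)) else 0) + f p) = f"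
  proof
    fix p show "(if prime p then enat (multiplicity p (2::nat)) else 0) + f p = f p"
    proof (cases "prime p")
      case True
      show ?thesis
      proof (cases "p = 2")
        case True thus ?thesis using assms(3) by simp
      next
        case False
        have "multiplicity p (2::nat) = 0"
          using False True by (metis not_dvd_imp_multiplicity_0 prime_nat_iff two_is_prime_nat primes_dvd_imp_eq)
        thus ?thesis using True assms(2) by (simp add: zero_enat_def[symmetric])
      qed
    qed (simp add: assms(1))
  qed
  thus ?thesis unfolding sn_mult_def f g by simp
qed

theorem mainTheorem14:
  fixes s :: "supernat \<Rightarrow> nat \<Rightarrow> real"
  assumes "bij_betw s UNIV ell2"
    and "\<forall>n::nat. n \<ge> 1 \<longrightarrow> s (sn_of_nat n) = (\<lambda>i. real n * e1 i)"
  shows "\<not> (\<forall>n::nat. n \<ge> 1 \<longrightarrow> (\<forall>m. oplus_rep s n m = sn_mult (sn_of_nat n) m))"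
proof
  assume H: "\<forall>n::nat. n \<ge> 1 \<longrightarrow> (\<forall>m. oplus_rep s n m = sn_mult (sn_of_nat n) m)"
  define f1 :: "nat \<Rightarrow> enat" where "f1 = (\<lambda>p. if p = 2 then \<infinity> else 0)"
  define f2 :: "nat \<Rightarrow> enat" where "f2 = (\<lambda>p. if prime p then \<infinity> else 0)"
  have f1: "\<forall>p. \<not> prime p \<longrightarrow> f1 p = 0" by (auto simp: f1_def)
  have f2: "\<forall>p. \<not> prime p \<longrightarrow> f2 p = 0" by (auto simp: f2_def)
  have "sn_mult (sn_of_nat 2) (Abs_supernat f1) = Abs_supernat f1"
    by (rule mult2_idem) (auto simp: f1_def)
  hence "oplus_rep s 2 (Abs_supernat f1) = Abs_supernat f1" using H by auto
  hence z1: "s (Abs_supernat f1) = (\<lambda>_. 0)" using idem_zero assms(1) by blast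
  have "sn_mult (sn_of_nat 2) (Abs_supernat f2) = Abs_supernat f2"
    by (rule mult2_idem) (auto simp: f2_def)
  hence "oplus_rep s 2 (Abs_supernat f2) = Abs_supernat f2" using H by auto
  hence z2: "s (Abs_supernat f2) = (\<lambda>_. 0)" using idem_zero assms(1) by blast
  have "inj s" using assms(1) by (simp add: bij_betw_def)
  hence "Abs_supernat f1 = Abs_supernat f2" using z1 z2 by (metis injD)
  hence "f1 = f2" using f1 f2 by (simp add: Abs_supernat_inject)
  hence "f1 3 = f2 3" by simp
  thus False by (simp add: f1_def f2_def)
qed

end
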